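(* Let $n,r,s,t\in\mathbb N$, let $G_{n,r,s,t}=(V,E,c)$ be the graph described in the context, and let $F\subseteq E$ be functional. Then the set of optimal edges for the subgraph $G_F$ (i.e. the set of edges $(u,v)\in F$ with $c(u,v)+y(v)=y(u)$, where $y(x)$ denotes the cost of a shortest path from $x$ to the target $\mathsf t$ in $G_F$) is exactly $\mathcal B_F$.
   Context: The graph $G_{n,r,s,t}$. Let $[m]=\{1,\dots,m\}$ and $\epsilon=1/(rs)$. Vertices: a target $\mathsf t$ (also denoted $u_{n+1}$ and $w_{n+1}$), $u_i,w_i$ for $i\in[n]$, $a_{i,j,k}$ for $i\in[n],j\in[r],k\in[s]$, and $b_{i,j}$ for $i\in[n],j\in[rs]$. Edges (for all $i\in[n]$; "$t$ copies" means $t$ parallel edges indexed by $\ell\in[t]$): - $a^1_{i,j,k}:a_{i,j,k}\to a_{i,j,k+1}$, cost $0$ ($j\in[r],k\in[s-1]$); $a^1_{i,j,s}:a_{i,j,s}\to b_{i,1}$, cost $0$; - $a^{0,\ell}_{i,j,k}:a_{i,j,k}\to u_{i+1}$, cost $2^{2i+1}+(k-1)\epsilon$, $t$ copies ($j\in[r],k\in[s]$); - $b^1_{i,j}:b_{i,j}\to b_{i,j+1}$, cost $0$ ($j\in[rs-1]$); $b^1_{i,rs}:b_{i,rs}\to w_{i+1}$, cost $0$; - $b^{0,\ell}_{i,j}:b_{i,j}\to u_{i+1}$, cost $2^{2i+1}+1+(j-1)\epsilon$, $t$ copies ($j\in[rs]$); - $u^{1,\ell}_i:u_i\to b_{i,1}$,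 cost $0$, $t$ copies; $u^{0,\ell}_i:u_i\to u_{i+1}$, cost $2^{2i}$, $t$ copies; - $w^{j,\ell}_i:w_i\to a_{i,j,1}$, cost $0$, $t$ copies for each $j\in[r]$; $w^{0,\ell}_i:w_i\to w_{i+1}$, cost $2^{2i}$, $t$ copies. Edge groups: ${\bf a}^1_{i,j}=\{a^1_{i,j,k}:k\in[s]\}$, ${\bf a}^0_{i,j,k}=\{a^{0,\ell}_{i,j,k}:\ell\in[t]\}$, ${\bf b}^1_i=\{b^1_{i,j}:j\in[rs]\}$, ${\bf b}^0_{i,j}=\{b^{0,\ell}_{i,j}:\ell\in[t]\}$, ${\bf u}^1_i=\{u^{1,\ell}_i\}_\ell$, ${\bf u}^0_i=\{u^{0,\ell}_i\}_\ell$, ${\bf w}^j_i=\{w^{j,\ell}_i\}_\ell$ ($j\in[r]$), ${\bf w}^0_i=\{w^{0,\ell}_i\}_\ell$. The multi-edges are the sets ${\bf u}^1_i,{\bf u}^0_i,{\bf w}^0_i,{\bf b}^0_{i,j},{\bf a}^0_{i,j,k},{\bf w}^j_i$. A set $F\subseteq E$ is functional if it intersects every multi-edge. Write ${\bf a}^1_i\sqsubseteq F$ if ${\bf a}^1_{i,j}\subseteq F$ for some $j\in[r]$. Define $last({\bf b}^1_i,F)=\max(\{0\}\cup\{j\in[rs]:b^1_{i,j}\notin F\})$, $last({\bf a}^1_{i,j},F)=\max(\{0\}\cup\{k\in[s]:a^1_{i,j,k}\notin F\})$, and $reset(F)=\max(\{0\}\cup\{i\in[n]:{\bf b}^1_i\subseteq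 F\text{ and not }{\bf a}^1_i\sqsubseteq F\})$. For functional $F$, $\mathcal B_F\subseteq F$ consists exactly of the following edges: (i) for each $i>reset(F)$ with ${\bf b}^1_i\subseteq F$: all $b^1_{i,j}$ ($j\in[rs]$); for $j\in[r],k\in[s]$: $a^1_{i,j,k}$ if $k>last({\bf a}^1_{i,j},F)$, and ${\bf a}^0_{i,j,k}\cap F$ otherwise; ${\bf u}^1_i\cap F$; ${\bf w}^j_i\cap F$ for every $j$ with ${\bf a}^1_{i,j}\subseteq F$. (ii) for each $i>reset(F)$ with ${\bf b}^1_i\not\subseteq F$: for $j\in[rs]$: $b^1_{i,j}$ if $j>last({\bf b}^1_i,F)$, and ${\bf b}^0_{i,j}\cap F$ otherwise; ${\bf a}^0_{i,j,k}\cap F$ for all $j,k$; ${\bf u}^0_i\cap F$; ${\bf w}^0_i\cap F$. (iii) for $i=reset(F)$ (if $\ge1$): all $b^1_{i,j}$; for $j\in[r],k\in[s]$: $a^1_{i,j,k}$ if $k>last({\bf a}^1_{i,j},F)$, and ${\bf a}^0_{i,j,k}\cap F$ otherwise; ${\bf u}^1_i\cap F$; ${\bf w}^0_i\cap F$. (iv) for each $i<reset(F)$: ${\bf b}^0_{i,j}\cap F$ for all $j\in[rs]$; ${\bf a}^0_{i,j,k}\cap F$ for all $j,k$; ${\bf u}^0_i\cap F$; ${\bf w}^j_i\cap F$ for all $j\in[r]$. *)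

theory Defs
  imports Complex_Main "HOL-Library.Extended_Real"
begin

text \<open>Vertices. Tgt is the target t (= u_{n+1} = w_{n+1}).\<close>
datatype vtx = Tgt | U nat | W nat | A nat nat nat | B nat nat

text \<open>Edges, carrying their indices (the last nat is the copy index l where applicable).
  EA1 i j k = a^1_{i,j,k};  EA0 i j k l = a^{0,l}_{i,j,k};  EB1 i j = b^1_{i,j};
  EB0 i j l = b^{0,l}_{i,j};  EU1 i l = u^{1,l}_i;  EU0 i l = u^{0,l}_i;
  EWj i j l = w^{j,l}_i;  EW0 i l = w^{0,l}_i.\<close>
datatype edge = EA1 nat nat nat | EA0 nat nat nat nat | EB1 nat nat | EB0 nat nat nat
  | EU1 nat nat | EU0 nat nat | EWj nat nat nat | EW0 nat nat

definition uv :: "nat \<Rightarrow> nat \<Rightarrow> vtx" where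
  "uv n m = (if m = Suc n then Tgt else U m)"

definition wv :: "nat \<Rightarrow> nat \<Rightarrow> vtx" where
  "wv n m = (if m = Suc n then Tgt else W m)"

fun src :: "edge \<Rightarrow> vtx" where
  "src (EA1 i j k) = A i j k"
| "src (EA0 i j k l) = A i j k"
| "src (EB1 i j) = B i j"
| "src (EB0 i j l) = B i j"
| "src (EU1 i l) = U i"
| "src (EU0 i l) = U i"
| "src (EWj i j l) = W i"
| "src (EW0 i l) = W i"

fun tgt :: "nat \<Rightarrow> nat \<Rightarrow> nat \<Rightarrow> edge \<Rightarrow> vtx" where
  "tgt n r s (EA1 i j k) = (if k < s then A i j (Suc k) else B i 1)"
| "tgt n r s (EA0 i j k l) = uv n (Suc i)"
| "tgt n r s (EB1 i j) = (if j < r * s then B i (Suc j) else wv n (Suc i))"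
| "tgt n r s (EB0 i j l) = uv n (Suc i)"
| "tgt n r s (EU1 i l) = B i 1"
| "tgt n r s (EU0 i l) = uv n (Suc i)"
| "tgt n r s (EWj i j l) = A i j 1"
| "tgt n r s (EW0 i l) = wv n (Suc i)"

definition eps :: "nat \<Rightarrow> nat \<Rightarrow> real" where
  "eps r s = 1 / (real r * real s)"

fun cost :: "nat \<Rightarrow> nat \<Rightarrow> edge \<Rightarrow> real" where
  "cost r s (EA1 i j k) = 0"
| "cost r s (EA0 i j k l) = 2 ^ (2 * i + 1) + (real k - 1) * eps r s"
| "cost r s (EB1 i j) = 0"
| "cost r s (EB0 i j l) = 2 ^ (2 * i + 1) + 1 + (real j - 1) * eps r s"
| "cost r s (EU1 i l) = 0"
| "cost r s (EU0 i l) = 2 ^ (2 * i)"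
| "cost r s (EWj i j l) = 0"
| "cost r s (EW0 i l) = 2 ^ (2 * i)"

definition edges :: "nat \<Rightarrow> nat \<Rightarrow> nat \<Rightarrow> nat \<Rightarrow> edge set" where
  "edges n r s t =
     {EA1 i j k | i j k. i \<in> {1..n} \<and> j \<in> {1..r} \<and> k \<in> {1..s}}
   \<union> {EA0 i j k l | i j k l. i \<in> {1..n} \<and> j \<in> {1..r} \<and> k \<in> {1..s} \<and> l \<in> {1..t}}
   \<union> {EB1 i j | i j. i \<in> {1..n} \<and> j \<in> {1..r*s}}
   \<union> {EB0 i j l | i j l. i \<in> {1..n} \<and> j \<in> {1..r*s} \<and> l \<in> {1..t}}
   \<union> {EU1 i l | i l. i \<in> {1..n} \<and> l \<in> {1..t}}
   \<union> {EU0 i l | i l. i \<in> {1..n} \<and> l \<in> {1..t}}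
   \<union> {EWj i j l | i j l. i \<in> {1..n} \<and> j \<in> {1..r} \<and> l \<in> {1..t}}
   \<union> {EW0 i l | i l. i \<in> {1..n} \<and> l \<in> {1..t}}"

definition a1grp :: "nat \<Rightarrow> nat \<Rightarrow> nat \<Rightarrow> edge set" where
  "a1grp s i j = {EA1 i j k | k. k \<in> {1..s}}"
definition a0grp :: "nat \<Rightarrow> nat \<Rightarrow> nat \<Rightarrow> nat \<Rightarrow> edge set" where
  "a0grp t i j k = {EA0 i j k l | l. l \<in> {1..t}}"
definition b1grp :: "nat \<Rightarrow> nat \<Rightarrow> nat \<Rightarrow> edge set" where
  "b1grp r s i = {EB1 i j | j. j \<in> {1..r*s}}"
definition b0grp :: "nat \<Rightarrow> nat \<Rightarrow> nat \<Rightarrow> edge set" where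
  "b0grp t i j = {EB0 i j l | l. l \<in> {1..t}}"
definition u1grp :: "nat \<Rightarrow> nat \<Rightarrow> edge set" where
  "u1grp t i = {EU1 i l | l. l \<in> {1..t}}"
definition u0grp :: "nat \<Rightarrow> nat \<Rightarrow> edge set" where
  "u0grp t i = {EU0 i l | l. l \<in> {1..t}}"
definition wjgrp :: "nat \<Rightarrow> nat \<Rightarrow> nat \<Rightarrow> edge set" where
  "wjgrp t i j = {EWj i j l | l. l \<in> {1..t}}"
definition w0grp :: "nat \<Rightarrow> nat \<Rightarrow> edge set" where
  "w0grp t i = {EW0 i l | l. l \<in> {1..t}}"

definition multiedges :: "nat \<Rightarrow> nat \<Rightarrow> nat \<Rightarrow> nat \<Rightarrow> edge set set" where
  "multiedges n r s t =
     {u1grp t i | i. i \<in> {1..n}} \<union> {u0grp t i | i. i \<in> {1..n}} \<union> {w0grp t i | i. i \<in> {1..n}}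
   \<union> {b0grp t i j | i j. i \<in> {1..n} \<and> j \<in> {1..r*s}}
   \<union> {a0grp t i j k | i j k. i \<in> {1..n} \<and> j \<in> {1..r} \<and> k \<in> {1..s}}
   \<union> {wjgrp t i j | i j. i \<in> {1..n} \<and> j \<in> {1..r}}"

definition functional :: "nat \<Rightarrow> nat \<Rightarrow> nat \<Rightarrow> nat \<Rightarrow> edge set \<Rightarrow> bool" where
  "functional n r s t F \<longleftrightarrow> F \<subseteq> edges n r s t \<and> (\<forall>M \<in> multiedges n r s t. M \<inter> F \<noteq> {})"

definition a1sq :: "nat \<Rightarrow> nat \<Rightarrow> nat \<Rightarrow> edge set \<Rightarrow> bool" where
  "a1sq r s i F \<longleftrightarrow> (\<exists>j \<in> {1..r}. a1grp s i j \<subseteq> F)"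

definition lastB :: "nat \<Rightarrow> nat \<Rightarrow> nat \<Rightarrow> edge set \<Rightarrow> nat" where
  "lastB r s i F = Max ({0} \<union> {j \<in> {1..r*s}. EB1 i j \<notin> F})"

definition lastA :: "nat \<Rightarrow> nat \<Rightarrow> nat \<Rightarrow> edge set \<Rightarrow> nat" where
  "lastA s i j F = Max ({0} \<union> {k \<in> {1..s}. EA1 i j k \<notin> F})"

definition reset :: "nat \<Rightarrow> nat \<Rightarrow> nat \<Rightarrow> edge set \<Rightarrow> nat" where
  "reset n r s F = Max ({0} \<union> {i \<in> {1..n}. b1grp r s i \<subseteq> F \<and> \<not> a1sq r s i F})"

definition BFi :: "nat \<Rightarrow> nat \<Rightarrow> nat \<Rightarrow> nat \<Rightarrow> edge set \<Rightarrow> nat \<Rightarrow> edge set" where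
  "BFi n r s t F i =
    (if i > reset n r s F \<and> b1grp r s i \<subseteq> F then
       b1grp r s i
       \<union> {EA1 i j k | j k. j \<in> {1..r} \<and> k \<in> {1..s} \<and> k > lastA s i j F}
       \<union> (\<Union>{a0grp t i j k \<inter> F | j k. j \<in> {1..r} \<and> k \<in> {1..s} \<and> \<not> k > lastA s i j F})
       \<union> (u1grp t i \<inter> F)
       \<union> (\<Union>{wjgrp t i j \<inter> F | j. j \<in> {1..r} \<and> a1grp s i j \<subseteq> F})
     else if i > reset n r s F then
       {EB1 i j | j. j \<in> {1..r*s} \<and> j > lastB r s i F}
       \<union> (\<Union>{b0grp t i j \<inter> F | j. j \<in> {1..r*s} \<and> \<not> j > lastB r s i F})
       \<union> (\<Union>{a0grp t i j k \<inter> F | j k. j \<in> {1..r} \<and> k \<in> {1..s}})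
       \<union> (u0grp t i \<inter> F)
       \<union> (w0grp t i \<inter> F)
     else if i = reset n r s F then
       b1grp r s i
       \<union> {EA1 i j k | j k. j \<in> {1..r} \<and> k \<in> {1..s} \<and> k > lastA s i j F}
       \<union> (\<Union>{a0grp t i j k \<inter> F | j k. j \<in> {1..r} \<and> k \<in> {1..s} \<and> \<not> k > lastA s i j F})
       \<union> (u1grp t i \<inter> F)
       \<union> (w0grp t i \<inter> F)
     else
       (\<Union>{b0grp t i j \<inter> F | j. j \<in> {1..r*s}})
       \<union> (\<Union>{a0grp t i j k \<inter> F | j k. j \<in> {1..r} \<and> k \<in> {1..s}})
       \<union> (u0grp t i \<inter> F)
       \<union> (\<Union>{wjgrp t i j \<inter> F | j. j \<in> {1..r}}))"

definition BF :: "nat \<Rightarrow> nat \<Rightarrow> nat \<Rightarrow> nat \<Rightarrow> edge set \<Rightarrow> edge set" where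
  "BF n r s t F = (\<Union>i \<in> {1..n}. BFi n r s t F i)"

inductive path :: "nat \<Rightarrow> nat \<Rightarrow> nat \<Rightarrow> edge set \<Rightarrow> vtx \<Rightarrow> edge list \<Rightarrow> bool"
  for n r s F where
  path_nil: "path n r s F Tgt []"
| path_cons: "e \<in> F \<Longrightarrow> src e = x \<Longrightarrow> path n r s F (tgt n r s e) es \<Longrightarrow> path n r s F x (e # es)"

text \<open>y(x): cost of a shortest path from x to the target in G_F (\<infinity> if none).\<close>
definition dist :: "nat \<Rightarrow> nat \<Rightarrow> nat \<Rightarrow> edge set \<Rightarrow> vtx \<Rightarrow> ereal" where
  "dist n r s F x = Inf {ereal (sum_list (map (cost r s) es)) | es. path n r s F x es}"

definition optimal_edges :: "nat \<Rightarrow> nat \<Rightarrow> nat \<Rightarrow> edge set \<Rightarrow> edge set" where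
  "optimal_edges n r s F =
     {e \<in> F. ereal (cost r s e) + dist n r s F (tgt n r s e) = dist n r s F (src e)}"

end

theory Submission imports Defs begin

locale GG =
  fixes n r s t :: nat and F :: "edge set"
  assumes r1: "r \<ge> 1" and s1: "s \<ge> 1" and func: "functional n r s t F"
begin

definition "R = reset n r s F"
definition "bfull i \<longleftrightarrow> b1grp r s i \<subseteq> F"
definition "q i = (2::real) ^ (2 * i)"
definition "h i = (if R < i then (if bfull i then 0 else q i) else if i = R then 0 else q i)"
definition "yU i = (\<Sum>m\<in>{i..n}. h m)"
definition "yW i = (if R < i then yU i else if i = R then q i + yU (Suc i) else 2 * q i + yU (Suc i))"
definition "QQ i \<longleftrightarrow> R \<le> i \<and> bfull i"
definition "yv x = (case x of Tgt \<Rightarrow> 0 | U i \<Rightarrow> yU i | W i \<Rightarrow> yW i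
   | A i j k \<Rightarrow> (if lastA s i j F < k \<and> QQ i then yW (Suc i)
                  else 2 * q i + (real k - 1) * eps r s + yU (Suc i))
   | B i j \<Rightarrow> (if R \<le> i \<and> lastB r s i F < j then yW (Suc i)
                  else 2 * q i + 1 + (real j - 1) * eps r s + yU (Suc i)))"

lemma yv_simps[simp]: "yv Tgt = 0" "yv (U i) = yU i" "yv (W i) = yW i"
  "yv (A i j k) = (if lastA s i j F < k \<and> QQ i then yW (Suc i)
                  else 2 * q i + (real k - 1) * eps r s + yU (Suc i))"
  "yv (B i j) = (if R \<le> i \<and> lastB r s i F < j then yW (Suc i)
                  else 2 * q i + 1 + (real j - 1) * eps r s + yU (Suc i))"
  by (simp_all add: yv_def)

lemma c_eq: "(2::real) ^ (2 * i + 1) = 2 * q i" by (simp add: q_def)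
lemma c_eq': "(2::real) ^ (2 * i) = q i" by (simp add: q_def)
lemma q_Suc: "q (Suc i) = 4 * q i" by (simp add: q_def)
lemma q_ge: "i \<ge> 1 \<Longrightarrow> q i \<ge> 4"
proof -
  assume "i \<ge> 1"
  then have "(2::real)^2 \<le> 2^(2*i)" by (intro power_increasing) auto
  then show ?thesis by (simp add: q_def)
qed
lemma q_pos: "q i > 0" by (simp add: q_def)

lemma yU_step: "i \<le> n \<Longrightarrow> yU i = h i + yU (Suc i)"
  unfolding yU_def by (simp add: sum.atLeast_Suc_atMost)
lemma yU_top: "yU (Suc n) = 0" unfolding yU_def by simp

lemma R_set_fin: "finite ({0} \<union> {i \<in> {1..n}. b1grp r s i \<subseteq> F \<and> \<not> a1sq r s i F})" by auto

lemma R_le: "R \<le> n"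
proof -
  have "R \<in> {0} \<union> {i \<in> {1..n}. b1grp r s i \<subseteq> F \<and> \<not> a1sq r s i F}"
    unfolding R_def reset_def using R_set_fin by (intro Max_in) auto
  then show ?thesis by auto
qed

lemma R_pos: "R \<ge> 1 \<Longrightarrow> bfull R \<and> \<not> a1sq r s R F"
proof -
  assume "R \<ge> 1"
  have "R \<in> {0} \<union> {i \<in> {1..n}. b1grp r s i \<subseteq> F \<and> \<not> a1sq r s i F}"
    unfolding R_def reset_def using R_set_fin by (intro Max_in) auto
  with \<open>R \<ge> 1\<close> show ?thesis by (auto simp: bfull_def)
qed

lemma R_above: "R < i \<Longrightarrow> i \<le> n \<Longrightarrow> bfull i \<Longrightarrow> a1sq r s i F"
proof (rule ccontr)
  assume a: "R < i" "i \<le> n" "bfull i" "\<not> a1sq r s i F"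
  then have "i \<in> {0} \<union> {i \<in> {1..n}. b1grp r s i \<subseteq> F \<and> \<not> a1sq r s i F}"
    by (auto simp: bfull_def)
  then have "i \<le> R" unfolding R_def reset_def using R_set_fin by (intro Max_ge) auto
  with a show False by simp
qed

lemma Wn_upper: "R \<le> i \<Longrightarrow> yW (Suc i) = yU (Suc i)" by (simp add: yW_def)

lemma Wn_lower: "i < R \<Longrightarrow> yW (Suc i) = yU (Suc i) + 4 * q i"
proof -
  assume a: "i < R"
  show ?thesis
  proof (cases "Suc i = R")
    case True
    then have "yU (Suc i) = yU (Suc (Suc i))" using yU_step[of "Suc i"] R_le by (simp add: h_def)
    then show ?thesis using True q_Suc[of i] by (simp add: yW_def)
  next
    case False
    then have "Suc i < R" using a by simp
    then have "yU (Suc i) = q (Suc i) + yU (Suc (Suc i))" using yU_step[of "Suc i"] R_le by (simp add: h_def)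
    then show ?thesis using \<open>Suc i < R\<close> by (simp add: yW_def q_Suc)
  qed
qed

lemma yW_step: "i \<le> n \<Longrightarrow> yW i = (if R < i then h i + yU (Suc i) else if i = R then q i + yU (Suc i) else 2 * q i + yU (Suc i))"
  by (simp add: yW_def yU_step)

lemma yv_uv: "i \<le> n \<Longrightarrow> yv (uv n (Suc i)) = yU (Suc i)"
  by (auto simp: uv_def yU_top)
lemma yv_wv: "i \<le> n \<Longrightarrow> yv (wv n (Suc i)) = yW (Suc i)"
  using R_le by (auto simp: wv_def yU_top yW_def)

lemma lastB_fin: "finite ({0} \<union> {j \<in> {1..r*s}. EB1 i j \<notin> F})" by auto
lemma lastB_le: "lastB r s i F \<le> r * s"
proof -
  have "lastB r s i F \<in> {0} \<union> {j \<in> {1..r*s}. EB1 i j \<notin> F}"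
    unfolding lastB_def using lastB_fin by (intro Max_in) auto
  then show ?thesis by auto
qed
lemma lastB_pos: "lastB r s i F \<ge> 1 \<Longrightarrow> EB1 i (lastB r s i F) \<notin> F"
proof -
  assume "lastB r s i F \<ge> 1"
  moreover have "lastB r s i F \<in> {0} \<union> {j \<in> {1..r*s}. EB1 i j \<notin> F}"
    unfolding lastB_def using lastB_fin by (intro Max_in) auto
  ultimately show ?thesis by auto
qed
lemma lastB_ge: "j \<in> {1..r*s} \<Longrightarrow> EB1 i j \<notin> F \<Longrightarrow> j \<le> lastB r s i F"
  unfolding lastB_def using lastB_fin by (intro Max_ge) auto
lemma lastB_in: "j \<in> {1..r*s} \<Longrightarrow> lastB r s i F < j \<Longrightarrow> EB1 i j \<in> F"
  using lastB_ge[of j i] by (meson not_le)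
lemma lastB_0: "lastB r s i F = 0 \<longleftrightarrow> bfull i"
proof
  assume "lastB r s i F = 0" then show "bfull i"
    unfolding bfull_def b1grp_def using lastB_in by auto
next
  assume b: "bfull i" show "lastB r s i F = 0"
  proof (rule ccontr)
    assume "lastB r s i F \<noteq> 0"
    then have "lastB r s i F \<ge> 1" by simp
    then have "EB1 i (lastB r s i F) \<notin> F" "lastB r s i F \<in> {1..r*s}" using lastB_pos lastB_le[of i] by auto
    with b show False unfolding bfull_def b1grp_def by blast
  qed
qed
lemma lastB_step: "j \<ge> 1 \<Longrightarrow> EB1 i j \<in> F \<Longrightarrow> (lastB r s i F < Suc j) = (lastB r s i F < j)"
proof -
  assume j1: "j \<ge> 1" and e: "EB1 i j \<in> F"
  have "lastB r s i F \<noteq> j"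
  proof
    assume "lastB r s i F = j"
    then show False using e lastB_pos[of i] j1 by auto
  qed
  then show ?thesis by auto
qed

lemma lastA_fin: "finite ({0} \<union> {k \<in> {1..s}. EA1 i j k \<notin> F})" by auto
lemma lastA_le: "lastA s i j F \<le> s"
proof -
  have "lastA s i j F \<in> {0} \<union> {k \<in> {1..s}. EA1 i j k \<notin> F}"
    unfolding lastA_def using lastA_fin by (intro Max_in) auto
  then show ?thesis by auto
qed
lemma lastA_pos: "lastA s i j F \<ge> 1 \<Longrightarrow> EA1 i j (lastA s i j F) \<notin> F"
proof -
  assume "lastA s i j F \<ge> 1"
  moreover have "lastA s i j F \<in> {0} \<union> {k \<in> {1..s}. EA1 i j k \<notin> F}"
    unfolding lastA_def using lastA_fin by (intro Max_in) auto
  ultimately show ?thesis by auto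
qed
lemma lastA_ge: "k \<in> {1..s} \<Longrightarrow> EA1 i j k \<notin> F \<Longrightarrow> k \<le> lastA s i j F"
  unfolding lastA_def using lastA_fin by (intro Max_ge) auto
lemma lastA_in: "k \<in> {1..s} \<Longrightarrow> lastA s i j F < k \<Longrightarrow> EA1 i j k \<in> F"
  using lastA_ge[of k i j] by (meson not_le)
lemma lastA_0: "lastA s i j F = 0 \<longleftrightarrow> a1grp s i j \<subseteq> F"
proof
  assume "lastA s i j F = 0" then show "a1grp s i j \<subseteq> F"
    unfolding a1grp_def using lastA_in by auto
next
  assume b: "a1grp s i j \<subseteq> F" show "lastA s i j F = 0"
  proof (rule ccontr)
    assume "lastA s i j F \<noteq> 0"
    then have "lastA s i j F \<ge> 1" by simp
    then have "EA1 i j (lastA s i j F) \<notin> F" "lastA s i j F \<in> {1..s}" using lastA_pos lastA_le[of i j] by auto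
    with b show False unfolding a1grp_def by blast
  qed
qed
lemma lastA_step: "k \<ge> 1 \<Longrightarrow> EA1 i j k \<in> F \<Longrightarrow> (lastA s i j F < Suc k) = (lastA s i j F < k)"
proof -
  assume k1: "k \<ge> 1" and e: "EA1 i j k \<in> F"
  have "lastA s i j F \<noteq> k"
  proof
    assume "lastA s i j F = k"
    then show False using e lastA_pos[of i j] k1 by auto
  qed
  then show ?thesis by auto
qed

lemma eps_pos: "eps r s > 0" using r1 s1 by (simp add: eps_def)
lemma jeps: "j \<le> r * s \<Longrightarrow> (real j - 1) * eps r s < 1"
proof -
  assume "j \<le> r * s"
  have "r * s \<ge> 1" using r1 s1 by simp
  then have rs: "real r * real s \<ge> 1" by (metis of_nat_1 of_nat_le_iff of_nat_mult)
  have "(real j - 1) * eps r s = (real j - 1) / (real r * real s)" by (simp add: eps_def)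
  also have "\<dots> < 1"
  proof -
    have "real j \<le> real r * real s" using \<open>j \<le> r*s\<close> by (metis of_nat_le_iff of_nat_mult)
    then show ?thesis using rs by (simp add: divide_less_eq)
  qed
  finally show ?thesis .
qed
lemma keps: "k \<le> s \<Longrightarrow> (real k - 1) * eps r s < 1"
proof -
  assume "k \<le> s"
  have "s \<le> r * s" using r1 by simp
  then show ?thesis using jeps \<open>k \<le> s\<close> by (meson le_trans)
qed


lemma eps_Suc: "(real (Suc k) - 1) * eps r s = (real k - 1) * eps r s + eps r s"
  by (simp add: algebra_simps)

lemma F_sub: "F \<subseteq> edges n r s t" using func by (simp add: functional_def)

lemma me: "M \<in> multiedges n r s t \<Longrightarrow> \<exists>e. e \<in> M \<and> e \<in> F"
  using func unfolding functional_def by blast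

lemma ex_b0: "i \<in> {1..n} \<Longrightarrow> j \<in> {1..r*s} \<Longrightarrow> \<exists>l. EB0 i j l \<in> F"
  using me[of "b0grp t i j"] unfolding multiedges_def b0grp_def by blast
lemma ex_a0: "i \<in> {1..n} \<Longrightarrow> j \<in> {1..r} \<Longrightarrow> k \<in> {1..s} \<Longrightarrow> \<exists>l. EA0 i j k l \<in> F"
  using me[of "a0grp t i j k"] unfolding multiedges_def a0grp_def by blast
lemma ex_u0: "i \<in> {1..n} \<Longrightarrow> \<exists>l. EU0 i l \<in> F"
  using me[of "u0grp t i"] unfolding multiedges_def u0grp_def by blast
lemma ex_u1: "i \<in> {1..n} \<Longrightarrow> \<exists>l. EU1 i l \<in> F"
  using me[of "u1grp t i"] unfolding multiedges_def u1grp_def by blast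
lemma ex_w0: "i \<in> {1..n} \<Longrightarrow> \<exists>l. EW0 i l \<in> F"
  using me[of "w0grp t i"] unfolding multiedges_def w0grp_def by blast
lemma ex_wj: "i \<in> {1..n} \<Longrightarrow> j \<in> {1..r} \<Longrightarrow> \<exists>l. EWj i j l \<in> F"
  using me[of "wjgrp t i j"] unfolding multiedges_def wjgrp_def by blast

fun eidx :: "edge \<Rightarrow> nat" where
  "eidx (EA1 i j k) = i" | "eidx (EA0 i j k l) = i" | "eidx (EB1 i j) = i" | "eidx (EB0 i j l) = i"
| "eidx (EU1 i l) = i" | "eidx (EU0 i l) = i" | "eidx (EWj i j l) = i" | "eidx (EW0 i l) = i"

lemma mem_Union2[simp]: "x \<in> \<Union>{f j k |j k. P j k} \<longleftrightarrow> (\<exists>j k. P j k \<and> x \<in> f j k)" by blast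
lemma mem_Union1[simp]: "x \<in> \<Union>{f j |j. P j} \<longleftrightarrow> (\<exists>j. P j \<and> x \<in> f j)" by blast

lemma ex_Union2[simp]: "(\<exists>x. (\<exists>j k. x = f j k \<and> P j k) \<and> y \<in> x) \<longleftrightarrow> (\<exists>j k. P j k \<and> y \<in> f j k)" by blast
lemma ex_Union1[simp]: "(\<exists>x. (\<exists>j. x = f j \<and> P j) \<and> y \<in> x) \<longleftrightarrow> (\<exists>j. P j \<and> y \<in> f j)" by blast
lemma all_Union2[simp]: "(\<forall>x. (\<forall>j k. x = f j k \<longrightarrow> \<not> P j k) \<or> y \<notin> x) \<longleftrightarrow> \<not>(\<exists>j k. P j k \<and> y \<in> f j k)" by blast

lemma BFi_idx: "e \<in> BFi n r s t F i \<Longrightarrow> eidx e = i"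
  unfolding BFi_def b1grp_def a0grp_def b0grp_def u1grp_def u0grp_def wjgrp_def w0grp_def
  by (auto split: if_splits)

lemma BF_iff: "e \<in> BF n r s t F \<longleftrightarrow> eidx e \<in> {1..n} \<and> e \<in> BFi n r s t F (eidx e)"
  unfolding BF_def using BFi_idx by blast

lemma R0: "i \<ge> 1 \<Longrightarrow> i = R \<Longrightarrow> bfull i" using R_pos by simp

lemma BF_EA1: "EA1 i j k \<in> BF n r s t F \<longleftrightarrow> i \<in> {1..n} \<and> j \<in> {1..r} \<and> k \<in> {1..s} \<and> lastA s i j F < k \<and> QQ i"
  unfolding BF_iff QQ_def using R0[of i]
  by (auto simp: BFi_def R_def[symmetric] bfull_def a0grp_def b0grp_def u1grp_def u0grp_def wjgrp_def w0grp_def b1grp_def)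

lemma BF_EA0: "EA0 i j k l \<in> BF n r s t F \<longleftrightarrow> i \<in> {1..n} \<and> j \<in> {1..r} \<and> k \<in> {1..s} \<and> l \<in> {1..t} \<and> EA0 i j k l \<in> F \<and> \<not> (lastA s i j F < k \<and> QQ i)"
  unfolding BF_iff QQ_def using R0[of i]
  by (auto simp: BFi_def R_def[symmetric] bfull_def a0grp_def b0grp_def u1grp_def u0grp_def wjgrp_def w0grp_def b1grp_def)

lemma BF_EB1: "EB1 i j \<in> BF n r s t F \<longleftrightarrow> i \<in> {1..n} \<and> j \<in> {1..r*s} \<and> lastB r s i F < j \<and> R \<le> i"
  unfolding BF_iff using R0[of i] lastB_0[of i]
  by (auto simp: BFi_def R_def[symmetric] bfull_def a0grp_def b0grp_def u1grp_def u0grp_def wjgrp_def w0grp_def b1grp_def)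

lemma BF_EB0: "EB0 i j l \<in> BF n r s t F \<longleftrightarrow> i \<in> {1..n} \<and> j \<in> {1..r*s} \<and> l \<in> {1..t} \<and> EB0 i j l \<in> F \<and> \<not> (lastB r s i F < j \<and> R \<le> i)"
  unfolding BF_iff using R0[of i] lastB_0[of i]
  by (auto simp: BFi_def R_def[symmetric] bfull_def a0grp_def b0grp_def u1grp_def u0grp_def wjgrp_def w0grp_def b1grp_def)

lemma BF_EU1: "EU1 i l \<in> BF n r s t F \<longleftrightarrow> i \<in> {1..n} \<and> l \<in> {1..t} \<and> EU1 i l \<in> F \<and> QQ i"
  unfolding BF_iff QQ_def using R0[of i]
  by (auto simp: BFi_def R_def[symmetric] bfull_def a0grp_def b0grp_def u1grp_def u0grp_def wjgrp_def w0grp_def b1grp_def)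

lemma BF_EU0: "EU0 i l \<in> BF n r s t F \<longleftrightarrow> i \<in> {1..n} \<and> l \<in> {1..t} \<and> EU0 i l \<in> F \<and> \<not> QQ i"
  unfolding BF_iff QQ_def using R0[of i]
  by (auto simp: BFi_def R_def[symmetric] bfull_def a0grp_def b0grp_def u1grp_def u0grp_def wjgrp_def w0grp_def b1grp_def)

lemma BF_EWj: "EWj i j l \<in> BF n r s t F \<longleftrightarrow> i \<in> {1..n} \<and> j \<in> {1..r} \<and> l \<in> {1..t} \<and> EWj i j l \<in> F \<and> (i < R \<or> (R < i \<and> bfull i \<and> a1grp s i j \<subseteq> F))"
  unfolding BF_iff
  by (auto simp: BFi_def R_def[symmetric] bfull_def a0grp_def b0grp_def u1grp_def u0grp_def wjgrp_def w0grp_def b1grp_def)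

lemma BF_EW0: "EW0 i l \<in> BF n r s t F \<longleftrightarrow> i \<in> {1..n} \<and> l \<in> {1..t} \<and> EW0 i l \<in> F \<and> (i = R \<or> (R < i \<and> \<not> bfull i))"
  unfolding BF_iff
  by (auto simp: BFi_def R_def[symmetric] bfull_def a0grp_def b0grp_def u1grp_def u0grp_def wjgrp_def w0grp_def b1grp_def)


lemma in_edges_simps:
  "EA1 i j k \<in> edges n r s t \<longleftrightarrow> i \<in> {1..n} \<and> j \<in> {1..r} \<and> k \<in> {1..s}"
  "EA0 i j k l \<in> edges n r s t \<longleftrightarrow> i \<in> {1..n} \<and> j \<in> {1..r} \<and> k \<in> {1..s} \<and> l \<in> {1..t}"
  "EB1 i j \<in> edges n r s t \<longleftrightarrow> i \<in> {1..n} \<and> j \<in> {1..r*s}"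
  "EB0 i j l \<in> edges n r s t \<longleftrightarrow> i \<in> {1..n} \<and> j \<in> {1..r*s} \<and> l \<in> {1..t}"
  "EU1 i l \<in> edges n r s t \<longleftrightarrow> i \<in> {1..n} \<and> l \<in> {1..t}"
  "EU0 i l \<in> edges n r s t \<longleftrightarrow> i \<in> {1..n} \<and> l \<in> {1..t}"
  "EWj i j l \<in> edges n r s t \<longleftrightarrow> i \<in> {1..n} \<and> j \<in> {1..r} \<and> l \<in> {1..t}"
  "EW0 i l \<in> edges n r s t \<longleftrightarrow> i \<in> {1..n} \<and> l \<in> {1..t}"
  by (auto simp: edges_def)

lemma inF: "e \<in> F \<Longrightarrow> e \<in> edges n r s t" using F_sub by blast

lemma h_QQ: "i \<ge> 1 \<Longrightarrow> h i = (if QQ i then 0 else q i)"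
  using R0[of i] by (auto simp: h_def QQ_def)

definition "tightok e \<longleftrightarrow> yv (src e) \<le> cost r s e + yv (tgt n r s e) \<and>
   (cost r s e + yv (tgt n r s e) = yv (src e) \<longleftrightarrow> e \<in> BF n r s t F)"

lemma t_EA1: assumes e: "EA1 i j k \<in> F" shows "tightok (EA1 i j k)"
proof -
  from inF[OF e] have i: "1 \<le> i" "i \<le> n" "1 \<le> j" "j \<le> r" "1 \<le> k" "k \<le> s" by (auto simp: in_edges_simps)
  show ?thesis
  proof (cases "k < s")
    case True
    have st: "(lastA s i j F < Suc k) = (lastA s i j F < k)" using lastA_step i e by simp
    show ?thesis using True st i eps_pos unfolding tightok_def
      by (auto simp: BF_EA1 eps_Suc)
  next
    case False
    then have ks: "k = s" using i by simp
    have la: "lastA s i j F < k" using lastA_le[of i j] lastA_pos[of i j] e ks i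
      by (metis le_neq_implies_less linorder_not_le less_one)
    have kk: "(real k - 1) * eps r s < 1" using keps i by simp
    have k0: "0 \<le> (real k - 1) * eps r s" using eps_pos i by simp
    have lb: "R \<le> i \<and> lastB r s i F < 1 \<longleftrightarrow> QQ i" using lastB_0[of i] by (auto simp: QQ_def)
    show ?thesis using ks la i kk k0 lb unfolding tightok_def
      by (auto simp: BF_EA1 q_pos)
  qed
qed

lemma t_EA0: assumes e: "EA0 i j k l \<in> F" shows "tightok (EA0 i j k l)"
proof -
  from inF[OF e] have i: "1 \<le> i" "i \<le> n" "1 \<le> j" "j \<le> r" "1 \<le> k" "k \<le> s" "1 \<le> l" "l \<le> t"
    by (auto simp: in_edges_simps)
  have k0: "0 \<le> (real k - 1) * eps r s" using eps_pos i by simp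
  have W: "QQ i \<Longrightarrow> yW (Suc i) = yU (Suc i)" using Wn_upper by (simp add: QQ_def)
  show ?thesis using i k0 W q_pos[of i] e unfolding tightok_def
    by (auto simp: BF_EA0 c_eq c_eq' yv_uv)
qed

lemma t_EB1: assumes e: "EB1 i j \<in> F" shows "tightok (EB1 i j)"
proof -
  from inF[OF e] have i: "1 \<le> i" "i \<le> n" "1 \<le> j" "j \<le> r * s" by (auto simp: in_edges_simps)
  show ?thesis
  proof (cases "j < r * s")
    case True
    have st: "(lastB r s i F < Suc j) = (lastB r s i F < j)" using lastB_step i e by simp
    show ?thesis using True st i eps_pos unfolding tightok_def
      by (auto simp: BF_EB1 eps_Suc)
  next
    case False
    then have ks: "j = r * s" using i by simp
    have la: "lastB r s i F < j" using lastB_le[of i] lastB_pos[of i] e ks i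
      by (metis le_neq_implies_less linorder_not_le less_one)
    have kk: "(real j - 1) * eps r s < 1" using jeps i by simp
    have q4: "q i \<ge> 4" using q_ge i by simp
    have W: "i < R \<Longrightarrow> yW (Suc i) = yU (Suc i) + 4 * q i" using Wn_lower by simp
    have W2: "R \<le> i \<Longrightarrow> yW (Suc i) = yU (Suc i)" using Wn_upper by simp
    show ?thesis using ks la i kk W W2 q4 unfolding tightok_def
      by (auto simp: BF_EB1 yv_wv)
  qed
qed

lemma t_EB0: assumes e: "EB0 i j l \<in> F" shows "tightok (EB0 i j l)"
proof -
  from inF[OF e] have i: "1 \<le> i" "i \<le> n" "1 \<le> j" "j \<le> r * s" "1 \<le> l" "l \<le> t"
    by (auto simp: in_edges_simps)
  have k0: "0 \<le> (real j - 1) * eps r s" using eps_pos i by simp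
  have W: "R \<le> i \<Longrightarrow> yW (Suc i) = yU (Suc i)" using Wn_upper by simp
  show ?thesis using i k0 W q_pos[of i] e unfolding tightok_def
    by (auto simp: BF_EB0 c_eq c_eq' yv_uv)
qed

lemma t_EU1: assumes e: "EU1 i l \<in> F" shows "tightok (EU1 i l)"
proof -
  from inF[OF e] have i: "1 \<le> i" "i \<le> n" "1 \<le> l" "l \<le> t" by (auto simp: in_edges_simps)
  have lb: "R \<le> i \<and> lastB r s i F < 1 \<longleftrightarrow> QQ i" using lastB_0[of i] by (auto simp: QQ_def)
  have W: "QQ i \<Longrightarrow> yW (Suc i) = yU (Suc i)" using Wn_upper by (simp add: QQ_def)
  show ?thesis using i lb W q_pos[of i] e h_QQ[of i] yU_step[of i] unfolding tightok_def
    by (auto simp: BF_EU1)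
qed

lemma t_EU0: assumes e: "EU0 i l \<in> F" shows "tightok (EU0 i l)"
proof -
  from inF[OF e] have i: "1 \<le> i" "i \<le> n" "1 \<le> l" "l \<le> t" by (auto simp: in_edges_simps)
  show ?thesis using i q_pos[of i] e h_QQ[of i] yU_step[of i] unfolding tightok_def
    by (auto simp: BF_EU0 c_eq' yv_uv)
qed

lemma t_EWj: assumes e: "EWj i j l \<in> F" shows "tightok (EWj i j l)"
proof -
  from inF[OF e] have i: "1 \<le> i" "i \<le> n" "1 \<le> j" "j \<le> r" "1 \<le> l" "l \<le> t" by (auto simp: in_edges_simps)
  have W: "R \<le> i \<Longrightarrow> yW (Suc i) = yU (Suc i)" using Wn_upper by simp
  have la: "lastA s i j F < 1 \<longleftrightarrow> a1grp s i j \<subseteq> F" using lastA_0[of i j] by auto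
  have nR: "i = R \<Longrightarrow> \<not> a1grp s i j \<subseteq> F" using R_pos i unfolding a1sq_def by auto
  show ?thesis using i W la nR q_pos[of i] e yW_step[of i] unfolding tightok_def
    by (auto simp: BF_EWj QQ_def h_def)
qed

lemma t_EW0: assumes e: "EW0 i l \<in> F" shows "tightok (EW0 i l)"
proof -
  from inF[OF e] have i: "1 \<le> i" "i \<le> n" "1 \<le> l" "l \<le> t" by (auto simp: in_edges_simps)
  have W: "R \<le> i \<Longrightarrow> yW (Suc i) = yU (Suc i)" using Wn_upper by simp
  have W2: "i < R \<Longrightarrow> yW (Suc i) = yU (Suc i) + 4 * q i" using Wn_lower by simp
  show ?thesis using i W W2 q_pos[of i] e yW_step[of i] unfolding tightok_def
    by (auto simp: BF_EW0 h_def c_eq' yv_wv)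
qed

lemma tight_all: "e \<in> F \<Longrightarrow> tightok e"
  by (cases e) (auto intro: t_EA1 t_EA0 t_EB1 t_EB0 t_EU1 t_EU0 t_EWj t_EW0)


definition "valid x = (case x of Tgt \<Rightarrow> True | U i \<Rightarrow> i \<in> {1..n} | W i \<Rightarrow> i \<in> {1..n}
  | A i j k \<Rightarrow> i \<in> {1..n} \<and> j \<in> {1..r} \<and> k \<in> {1..s} | B i j \<Rightarrow> i \<in> {1..n} \<and> j \<in> {1..r*s})"

definition "MM = r * s + s + 3"
definition "lv i = (n + 1 - i) * MM"
definition "rank x = (case x of Tgt \<Rightarrow> 0 | U i \<Rightarrow> lv i + (r*s+1) | W i \<Rightarrow> lv i + (r*s+s+2)
  | A i j k \<Rightarrow> lv i + (r*s+s+1-k) | B i j \<Rightarrow> lv i + (r*s+1-j))"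

lemma lv_Suc: "i \<le> n \<Longrightarrow> lv i = lv (Suc i) + MM"
  unfolding lv_def by (simp add: Suc_diff_le)

lemma valid_uv: "i \<in> {1..n} \<Longrightarrow> valid (uv n (Suc i)) \<and> rank (uv n (Suc i)) < lv i"
  using lv_Suc[of i] by (auto simp: uv_def valid_def rank_def MM_def)
lemma valid_wv: "i \<in> {1..n} \<Longrightarrow> valid (wv n (Suc i)) \<and> rank (wv n (Suc i)) < lv i"
  using lv_Suc[of i] by (auto simp: wv_def valid_def rank_def MM_def)

lemma edge_ok: assumes e: "e \<in> F"
  shows "valid (src e) \<and> valid (tgt n r s e) \<and> rank (tgt n r s e) < rank (src e)"
proof -
  have ee: "e \<in> edges n r s t" using inF[OF e] .
  show ?thesis
  proof (cases e)
    case (EA1 i j k)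
    then show ?thesis using ee valid_uv[of i] by (auto simp: in_edges_simps valid_def rank_def)
  next
    case (EA0 i j k l)
    then show ?thesis using ee valid_uv[of i] by (auto simp: in_edges_simps valid_def rank_def)
  next
    case (EB1 i j)
    then show ?thesis using ee valid_wv[of i] by (auto simp: in_edges_simps valid_def rank_def)
  next
    case (EB0 i j l)
    then show ?thesis using ee valid_uv[of i] by (auto simp: in_edges_simps valid_def rank_def)
  next
    case (EU1 i l)
    then show ?thesis using ee r1 s1 by (auto simp: in_edges_simps valid_def rank_def)
  next
    case (EU0 i l)
    then show ?thesis using ee valid_uv[of i] by (auto simp: in_edges_simps valid_def rank_def)
  next
    case (EWj i j l)
    then show ?thesis using ee s1 by (auto simp: in_edges_simps valid_def rank_def)
  next
    case (EW0 i l)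
    then show ?thesis using ee valid_wv[of i] by (auto simp: in_edges_simps valid_def rank_def)
  qed
qed

lemma BF_sub: "e \<in> BF n r s t F \<Longrightarrow> e \<in> F"
  by (cases e) (auto simp: BF_EA1 BF_EA0 BF_EB1 BF_EB0 BF_EU1 BF_EU0 BF_EWj BF_EW0 intro: lastA_in lastB_in)

lemma ex_BF: assumes "valid x" "x \<noteq> Tgt" shows "\<exists>e \<in> BF n r s t F. src e = x"
proof (cases x)
  case Tgt then show ?thesis using assms by simp
next
  case (U i)
  then have i: "i \<in> {1..n}" using assms by (simp add: valid_def)
  show ?thesis
  proof (cases "QQ i")
    case True
    then obtain l where "EU1 i l \<in> F" using ex_u1 i by blast
    then show ?thesis using True i U inF[of "EU1 i l"] by (intro bexI[of _ "EU1 i l"]) (auto simp: BF_EU1 in_edges_simps)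
  next
    case False
    then obtain l where "EU0 i l \<in> F" using ex_u0 i by blast
    then show ?thesis using False i U inF[of "EU0 i l"] by (intro bexI[of _ "EU0 i l"]) (auto simp: BF_EU0 in_edges_simps)
  qed
next
  case (W i)
  then have i: "i \<in> {1..n}" using assms by (simp add: valid_def)
  show ?thesis
  proof (cases "i < R")
    case True
    then obtain l where "EWj i 1 l \<in> F" using ex_wj i r1 by auto
    then show ?thesis using True i W inF[of "EWj i 1 l"] by (intro bexI[of _ "EWj i 1 l"]) (auto simp: BF_EWj in_edges_simps)
  next
    case False
    show ?thesis
    proof (cases "R < i \<and> bfull i")
      case True
      have "a1sq r s i F" using R_above[of i] True i by simp
      then obtain j where j: "j \<in> {1..r}" "a1grp s i j \<subseteq> F" unfolding a1sq_def by blast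
      then obtain l where "EWj i j l \<in> F" using ex_wj i by blast
      then show ?thesis using True i j W inF[of "EWj i j l"] by (intro bexI[of _ "EWj i j l"]) (auto simp: BF_EWj in_edges_simps)
    next
      case False2: False
      obtain l where "EW0 i l \<in> F" using ex_w0 i by blast
      then show ?thesis using False False2 i W inF[of "EW0 i l"] by (intro bexI[of _ "EW0 i l"]) (auto simp: BF_EW0 in_edges_simps)
    qed
  qed
next
  case (A i j k)
  then have i: "i \<in> {1..n}" "j \<in> {1..r}" "k \<in> {1..s}" using assms by (auto simp: valid_def)
  show ?thesis
  proof (cases "lastA s i j F < k \<and> QQ i")
    case True
    then show ?thesis using i A by (intro bexI[of _ "EA1 i j k"]) (auto simp: BF_EA1)
  next
    case False
    then obtain l where "EA0 i j k l \<in> F" using ex_a0 i by blast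
    then show ?thesis using False i A inF[of "EA0 i j k l"] by (intro bexI[of _ "EA0 i j k l"]) (auto simp: BF_EA0 in_edges_simps)
  qed
next
  case (B i j)
  then have i: "i \<in> {1..n}" "j \<in> {1..r*s}" using assms by (auto simp: valid_def)
  show ?thesis
  proof (cases "lastB r s i F < j \<and> R \<le> i")
    case True
    then show ?thesis using i B by (intro bexI[of _ "EB1 i j"]) (auto simp: BF_EB1)
  next
    case False
    then obtain l where "EB0 i j l \<in> F" using ex_b0 i by blast
    then show ?thesis using False i B inF[of "EB0 i j l"] by (intro bexI[of _ "EB0 i j l"]) (auto simp: BF_EB0 in_edges_simps)
  qed
qed

lemma path_lower: "path n r s F x es \<Longrightarrow> yv x \<le> sum_list (map (cost r s) es)"
proof (induction rule: path.induct)
  case path_nil then show ?case by simp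
next
  case (path_cons e x es)
  have "yv (src e) \<le> cost r s e + yv (tgt n r s e)" using tight_all[OF path_cons(1)] by (simp add: tightok_def)
  then show ?case using path_cons by simp
qed

lemma path_exists: "valid x \<Longrightarrow> \<exists>es. path n r s F x es \<and> sum_list (map (cost r s) es) = yv x"
proof (induction "rank x" arbitrary: x rule: less_induct)
  case less
  show ?case
  proof (cases "x = Tgt")
    case True then show ?thesis by (auto intro: path_nil)
  next
    case False
    obtain e where e: "e \<in> BF n r s t F" "src e = x" using ex_BF[OF less(2) False] by blast
    have eF: "e \<in> F" using BF_sub e(1) .
    have tt: "cost r s e + yv (tgt n r s e) = yv x" using tight_all[OF eF] e by (simp add: tightok_def)
    have ok: "valid (tgt n r s e)" "rank (tgt n r s e) < rank x" using edge_ok[OF eF] e(2) by auto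
    obtain es where es: "path n r s F (tgt n r s e) es" "sum_list (map (cost r s) es) = yv (tgt n r s e)"
      using less(1)[OF ok(2) ok(1)] by blast
    show ?thesis using path_cons[OF eF e(2) es(1)] es(2) tt by (intro exI[of _ "e # es"]) simp
  qed
qed

lemma dist_eq: "valid x \<Longrightarrow> dist n r s F x = ereal (yv x)"
proof -
  assume v: "valid x"
  obtain es where es: "path n r s F x es" "sum_list (map (cost r s) es) = yv x" using path_exists[OF v] by blast
  show ?thesis unfolding dist_def
  proof (rule antisym)
    show "Inf {ereal (sum_list (map (cost r s) es)) |es. path n r s F x es} \<le> ereal (yv x)"
      using es by (intro Inf_lower) (metis (mono_tags, lifting) mem_Collect_eq)
    show "ereal (yv x) \<le> Inf {ereal (sum_list (map (cost r s) es)) |es. path n r s F x es}"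
      using path_lower by (intro Inf_greatest) auto
  qed
qed

lemma main: "optimal_edges n r s F = BF n r s t F"
proof
  show "optimal_edges n r s F \<subseteq> BF n r s t F"
  proof
    fix e assume "e \<in> optimal_edges n r s F"
    then have eF: "e \<in> F" and eq: "ereal (cost r s e) + dist n r s F (tgt n r s e) = dist n r s F (src e)"
      unfolding optimal_edges_def by auto
    have v: "valid (src e)" "valid (tgt n r s e)" using edge_ok[OF eF] by auto
    have "cost r s e + yv (tgt n r s e) = yv (src e)" using eq by (simp add: dist_eq[OF v(1)] dist_eq[OF v(2)])
    then show "e \<in> BF n r s t F" using tight_all[OF eF] by (simp add: tightok_def)
  qed
next
  show "BF n r s t F \<subseteq> optimal_edges n r s F"
  proof
    fix e assume e: "e \<in> BF n r s t F"
    have eF: "e \<in> F" using BF_sub[OF e] .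
    have v: "valid (src e)" "valid (tgt n r s e)" using edge_ok[OF eF] by auto
    have "cost r s e + yv (tgt n r s e) = yv (src e)" using tight_all[OF eF] e by (simp add: tightok_def)
    then show "e \<in> optimal_edges n r s F" unfolding optimal_edges_def
      using eF by (simp add: dist_eq[OF v(1)] dist_eq[OF v(2)])
  qed
qed

end

theorem mainTheorem5:
  fixes n r s t :: nat and F :: "edge set"
  assumes "r \<ge> 1" and "s \<ge> 1"
    and "functional n r s t F"
  shows "optimal_edges n r s F = BF n r s t F"
proof -
  interpret GG n r s t F using assms by unfold_locales
  show ?thesis by (rule main)
qed

end
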